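(* Let $R_e\approx 1.4877$ be the unique positive root of $\frac{10}{7(R+1)}-\frac{R^2\sqrt{R}}{R^2+R+1}=0$. Define, for $x,y\ge 0$, $$d_0(x,y)=\frac{1+2x}{1+x}+\frac{xy}{1+y+xy},\quad d_1(x,y)=-\frac{x}{1+x}-\frac{xy}{1+y+xy}-\frac{xy^2}{1+y+xy}\frac{1+x}{1+y},\quad d_2(x,y)=\frac{xy^2}{1+y+xy}\frac{1+x}{1+y},$$ and, for $0<x,y,z<R_e$, $$d_*(x,y)=-\tfrac{10}{7}\sqrt{x}\,d_1(x,y)-\sqrt{xy}\,d_2(x,y),$$ $$p(x,y,z)=2d_0(y,z)-\sqrt{yz}\,d_2(y,z)-\tfrac{49}{100}d_*(y,z)-d_*(x,y),\qquad q(x,y,z)=d_*(y,z)-\sqrt{xy}\,d_2(x,y).$$ Let $\tau_k>0$ ($k\ge 1$) be time-step sizes with step ratios $r_k=\tau_k/\tau_{k-1}$ satisfying $0<r_k<R_e$ for all $k\ge 2$, and set $d^{(n)}_j=d_j(r_n,r_{n-1})$ for $j=0,1,2$. Then for every $n\ge 3$ and all real numbers $v_{n-2},v_{n-1},v_n$, $$2v_n\tau_n\big(d^{(n)}_0v_n+d^{(n)}_1v_{n-1}+d^{(n)}_2v_{n-2}\big)=G[v_n,v_{n-1}]-G[v_{n-1},v_{n-2}]+F[v_n,v_{n-1},v_{n-2}],$$ where $$G[v_n,v_{n-1}]=d_*(r_{n+1},r_n)\tau_nv_n^2+\sqrt{r_{n+1}r_n}\,d_2(r_{n+1},r_n)\big(\tfrac{7}{10}\sqrt{\tau_n}v_n-\sqrt{\tau_{n-1}}v_{n-1}\big)^2$$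 (and $G[v_{n-1},v_{n-2}]$ is the same expression with $n$ replaced by $n-1$), $$F[v_n,v_{n-1},v_{n-2}]=p(r_{n+1},r_n,r_{n-1})\tau_nv_n^2+q(r_{n+1},r_n,r_{n-1})\big(\tfrac{7}{10}\sqrt{\tau_n}v_n-\sqrt{\tau_{n-1}}v_{n-1}\big)^2+\sqrt{r_nr_{n-1}}\,d_2(r_n,r_{n-1})\big(\sqrt{\tau_n}v_n-\tfrac{7}{10}\sqrt{\tau_{n-1}}v_{n-1}+\sqrt{\tau_{n-2}}v_{n-2}\big)^2,$$ the functionals $G$ and $F$ are nonnegative, and $F[v_n,v_{n-1},v_{n-2}]\ge \frac{\tau_n}{50}v_n^2$.
   Context: The quantities $d^{(n)}_j$ are the variable-step BDF3 kernels: the BDF3 formula is $D_3v^n=\sum_{j=1}^n d^{(n)}_{n-j}\partial_\tau v^j$ with $\partial_\tau v^j=(v^j-v^{j-1})/\tau_j$, $d^{(n)}_j=d_j(r_n,r_{n-1})$ for $j=0,1,2$ and $d^{(n)}_j=0$ for $j\ge 3$. *)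

theory Defs
  imports Complex_Main
begin

definition Re_crit :: real where
  "Re_crit = (THE R. R > 0 \<and> 10 / (7 * (R + 1)) - R^2 * sqrt R / (R^2 + R + 1) = 0)"

definition d0 :: "real \<Rightarrow> real \<Rightarrow> real" where
  "d0 x y = (1 + 2*x) / (1 + x) + x*y / (1 + y + x*y)"

definition d1 :: "real \<Rightarrow> real \<Rightarrow> real" where
  "d1 x y = - x / (1 + x) - x*y / (1 + y + x*y) - x*y^2 / (1 + y + x*y) * ((1 + x) / (1 + y))"

definition d2 :: "real \<Rightarrow> real \<Rightarrow> real" where
  "d2 x y = x*y^2 / (1 + y + x*y) * ((1 + x) / (1 + y))"

definition dstar :: "real \<Rightarrow> real \<Rightarrow> real" where
  "dstar x y = - (10/7) * sqrt x * d1 x y - sqrt (x*y) * d2 x y"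

definition pfun :: "real \<Rightarrow> real \<Rightarrow> real \<Rightarrow> real" where
  "pfun x y z = 2 * d0 y z - sqrt (y*z) * d2 y z - (49/100) * dstar y z - dstar x y"

definition qfun :: "real \<Rightarrow> real \<Rightarrow> real \<Rightarrow> real" where
  "qfun x y z = dstar y z - sqrt (x*y) * d2 x y"

definition ratio :: "(nat \<Rightarrow> real) \<Rightarrow> nat \<Rightarrow> real" where
  "ratio tau k = tau k / tau (k - 1)"

definition Gfun :: "(nat \<Rightarrow> real) \<Rightarrow> nat \<Rightarrow> real \<Rightarrow> real \<Rightarrow> real" where
  "Gfun tau n a b =
     dstar (ratio tau (n+1)) (ratio tau n) * tau n * a^2
   + sqrt (ratio tau (n+1) * ratio tau n) * d2 (ratio tau (n+1)) (ratio tau n)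
       * ((7/10) * sqrt (tau n) * a - sqrt (tau (n-1)) * b)^2"

definition Ffun :: "(nat \<Rightarrow> real) \<Rightarrow> nat \<Rightarrow> real \<Rightarrow> real \<Rightarrow> real \<Rightarrow> real" where
  "Ffun tau n a b c =
     pfun (ratio tau (n+1)) (ratio tau n) (ratio tau (n-1)) * tau n * a^2
   + qfun (ratio tau (n+1)) (ratio tau n) (ratio tau (n-1))
       * ((7/10) * sqrt (tau n) * a - sqrt (tau (n-1)) * b)^2
   + sqrt (ratio tau n * ratio tau (n-1)) * d2 (ratio tau n) (ratio tau (n-1))
       * (sqrt (tau n) * a - (7/10) * sqrt (tau (n-1)) * b + sqrt (tau (n-2)) * c)^2"

end

theory Submission
  imports Defs
begin

definition fR :: "real \<Rightarrow> real" where
  "fR R = 10 / (7 * (R + 1)) - R^2 * sqrt R / (R^2 + R + 1)"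

lemma fR_strict_dec:
  assumes "0 < s" "s < t" shows "fR t < fR s"
proof -
  have 1: "10 / (7 * (t + 1)) < 10 / (7 * (s + 1))"
    using assms by (simp add: divide_simps)
  have 2: "s^2 / (s^2 + s + 1) < t^2 / (t^2 + t + 1)"
  proof -
    have "s^2 * (t^2 + t + 1) < t^2 * (s^2 + s + 1)"
    proof -
      have "s^2 * t + s^2 < t^2 * s + t^2"
        proof -
        have "s^2 * t < t^2 * s" using assms by (simp add: power2_eq_square mult_strict_left_mono mult.assoc mult.left_commute)
        moreover have "s^2 < t^2" using assms by (simp add: power_strict_mono)
        ultimately show ?thesis by linarith
      qed
      then show ?thesis by (simp add: algebra_simps power2_eq_square)
    qed
    then show ?thesis using assms by (simp add: divide_simps add_pos_pos)
  qed
  have 3: "sqrt s < sqrt t" using assms by simp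
  have "s^2 / (s^2 + s + 1) * sqrt s < t^2 / (t^2 + t + 1) * sqrt t"
  proof (rule mult_strict_mono[OF 2 3])
    show "0 < t^2 / (t^2 + t + 1)" using assms by (simp add: add_pos_pos)
  qed (use assms in auto)
  then have "s^2 * sqrt s / (s^2 + s + 1) < t^2 * sqrt t / (t^2 + t + 1)"
    by (simp add: algebra_simps)
  then show ?thesis using 1 unfolding fR_def by linarith
qed

lemma fR_cont: "continuous_on {1..149/100} fR"
proof -
  have h: "x^2 + x + 1 \<noteq> 0" if "x \<in> {1..149/100}" for x :: real
  proof -
    have "x^2 + x + 1 > 0" using that by (simp add: add_pos_pos)
    then show ?thesis by simp
  qed
  show ?thesis unfolding fR_def by (intro continuous_intros) (use h in auto)
qed

lemma fR1: "fR 1 > 0" unfolding fR_def by simp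

lemma sqrt149: "sqrt (149/100) > 1218/1000"
  by (rule real_less_rsqrt) (simp add: power2_eq_square)

lemma fR149: "fR (149/100) < 0"
proof -
  have "fR (149/100) = 1000/1743 - (22201/47101) * sqrt(149/100)"
    unfolding fR_def by (simp add: power2_eq_square)
  then show ?thesis using sqrt149 by linarith
qed

lemma Re_props: "0 < Re_crit \<and> Re_crit < 149/100 \<and> fR Re_crit = 0"
proof -
  have "\<exists>x. 1 \<le> x \<and> x \<le> 149/100 \<and> fR x = 0"
    by (rule IVT2'[OF less_imp_le[OF fR149] less_imp_le[OF fR1] _ fR_cont]) simp
  then obtain r where r: "1 \<le> r" "r \<le> 149/100" "fR r = 0" by blast
  have r1: "r < 149/100" using r fR149 by (cases "r = 149/100") auto
  have uniq: "R = r" if R: "R > 0" "fR R = 0" for R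
  proof (rule ccontr)
    assume "R \<noteq> r"
    then consider "R < r" | "r < R" by linarith
    then show False
    proof cases
      case 1 then show False using fR_strict_dec[of R r] R r by simp
    next
      case 2 then show False using fR_strict_dec[of r R] R r by simp
    qed
  qed
  have "Re_crit = r" unfolding Re_crit_def
  proof (rule the_equality)
    show "r > 0 \<and> 10 / (7 * (r + 1)) - r^2 * sqrt r / (r^2 + r + 1) = 0"
      using r unfolding fR_def by simp
  next
    fix R assume "R > 0 \<and> 10 / (7 * (R + 1)) - R^2 * sqrt R / (R^2 + R + 1) = 0"
    then show "R = r" using uniq unfolding fR_def by blast
  qed
  then show ?thesis using r r1 by simp
qed

lemma fR_pos: assumes "0 < t" "t < Re_crit" shows "fR t > 0"
  using fR_strict_dec[OF assms] Re_props by simp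


definition Af :: "real \<Rightarrow> real" where "Af x = x / (1 + x)"
definition Bf :: "real \<Rightarrow> real \<Rightarrow> real" where "Bf x y = x * y / (1 + y + x * y)"

lemma d0_eq: "x > 0 \<Longrightarrow> y > 0 \<Longrightarrow> d0 x y = 1 + Af x + Bf x y"
  unfolding d0_def Af_def Bf_def by (simp add: field_simps)

lemma d1_eq: "d1 x y = - Af x - Bf x y - d2 x y"
  unfolding d1_def d2_def Af_def Bf_def by (simp add: field_simps)

lemma Af_nn: "x > 0 \<Longrightarrow> Af x \<ge> 0" unfolding Af_def by simp
lemma Bf_nn: "x > 0 \<Longrightarrow> y > 0 \<Longrightarrow> Bf x y \<ge> 0" unfolding Bf_def by (simp add: add_pos_pos)
lemma d2_nn: "x > 0 \<Longrightarrow> y > 0 \<Longrightarrow> d2 x y \<ge> 0" unfolding d2_def by (simp add: add_pos_pos)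

lemma dstar_eq: "x > 0 \<Longrightarrow> y > 0 \<Longrightarrow>
  dstar x y = 10/7 * sqrt x * Af x + 10/7 * sqrt x * Bf x y + sqrt x * d2 x y * (10/7 - sqrt y)"
  unfolding dstar_def d1_eq by (simp add: real_sqrt_mult field_simps)

lemma dstar_lb:
  assumes "x > 0" "y > 0" "y \<le> 2"
  shows "dstar x y \<ge> 10/7 * sqrt x * Af x"
proof -
  have "sqrt y \<le> sqrt 2" using assms by simp
  also have "sqrt 2 \<le> sqrt ((10/7)^2)" by (simp add: power2_eq_square)
  also have "\<dots> = 10/7" by simp
  finally have s: "10/7 - sqrt y \<ge> 0" by simp
  have "10/7 * sqrt x * Bf x y \<ge> 0" using assms Bf_nn by simp
  moreover have "sqrt x * d2 x y * (10/7 - sqrt y) \<ge> 0" using assms d2_nn s by simp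
  ultimately show ?thesis using dstar_eq[OF assms(1,2)] by linarith
qed

lemma dstar_nn: "x > 0 \<Longrightarrow> y > 0 \<Longrightarrow> y \<le> 2 \<Longrightarrow> dstar x y \<ge> 0"
proof -
  assume a: "x > 0" "y > 0" "y \<le> 2"
  have "10/7 * sqrt x * Af x \<ge> 0" using a Af_nn[of x] by simp
  then show ?thesis using dstar_lb[OF a] by linarith
qed

lemma frac_le: "(0::real) < b \<Longrightarrow> 0 < d \<Longrightarrow> a*d \<le> c*b \<Longrightarrow> a/b \<le> c/d"
  by (simp add: divide_simps)

lemma poly1:
  fixes x y m :: real
  assumes "0 < x" "x \<le> m" "0 < y" "y \<le> m"
  shows "x * y * (1 + x) / (1 + y + x * y) \<le> m * m * (1 + m) / (1 + m + m * m)"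
proof -
  have m: "m > 0" using assms by simp
  have p1: "1 + y + x * y > 0" "1 + m + x * m > 0" "1 + m + m * m > 0" using assms m by (auto intro!: add_pos_pos)
  have "x * y * (1 + x) / (1 + y + x * y) \<le> x * m * (1 + x) / (1 + m + x * m)"
  proof (rule frac_le[OF p1(1,2)])
    have "y * (1 + m + x * m) \<le> m * (1 + y + x * y)" using assms by (simp add: algebra_simps)
    then have "x * (1 + x) * (y * (1 + m + x * m)) \<le> x * (1 + x) * (m * (1 + y + x * y))"
      using assms by (intro mult_left_mono) auto
    then show "x * y * (1 + x) * (1 + m + x * m) \<le> x * m * (1 + x) * (1 + y + x * y)"
      by (simp add: mult_ac)
  qed
  also have "\<dots> \<le> m * m * (1 + m) / (1 + m + m * m)"
  proof (rule frac_le[OF p1(2,3)])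
    have eq: "m * (1 + m) * (1 + m + x * m) - x * (1 + x) * (1 + m + m * m)
       = (m - x) * ((1 + m)^2 + (1 + m + m * m) * x)" by (simp add: algebra_simps power2_eq_square)
    have "(m - x) * ((1 + m)^2 + (1 + m + m * m) * x) \<ge> 0" using assms m by (intro mult_nonneg_nonneg add_nonneg_nonneg) auto
    then have "x * (1 + x) * (1 + m + m * m) \<le> m * (1 + m) * (1 + m + x * m)" using eq by linarith
    then have "m * (x * (1 + x) * (1 + m + m * m)) \<le> m * (m * (1 + m) * (1 + m + x * m))"
      using m by (intro mult_left_mono) auto
    then show "x * m * (1 + x) * (1 + m + m * m) \<le> m * m * (1 + m) * (1 + m + x * m)"
      by (simp add: mult_ac)
  qed
  finally show ?thesis .
qed


lemma Af_mono: "0 \<le> s \<Longrightarrow> s \<le> t \<Longrightarrow> Af s \<le> Af t"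
  unfolding Af_def by (rule frac_le) (auto simp: algebra_simps)

lemma Bf_mono1:
  assumes "0 \<le> x" "x \<le> x'" "0 \<le> y" shows "Bf x y \<le> Bf x' y"
  unfolding Bf_def
proof (rule frac_le)
  show "0 < 1 + y + x * y" "0 < 1 + y + x' * y" using assms by (auto intro!: add_pos_nonneg)
  have e: "x' * y * (1 + y + x * y) - x * y * (1 + y + x' * y) = (x' - x) * (y * (1 + y))"
    by (simp add: algebra_simps)
  have "(x' - x) * (y * (1 + y)) \<ge> 0" using assms by simp
  then show "x * y * (1 + y + x' * y) \<le> x' * y * (1 + y + x * y)" using e by linarith
qed

lemma Bf_mono2:
  assumes "0 \<le> x" "0 \<le> y" "y \<le> y'" shows "Bf x y \<le> Bf x y'"
  unfolding Bf_def
proof (rule frac_le)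
  show "0 < 1 + y + x * y" "0 < 1 + y' + x * y'" using assms by (auto intro!: add_pos_nonneg)
  have e: "x * y' * (1 + y + x * y) - x * y * (1 + y' + x * y') = x * (y' - y)"
    by (simp add: algebra_simps)
  have "x * (y' - y) \<ge> 0" using assms by simp
  then show "x * y * (1 + y' + x * y') \<le> x * y' * (1 + y + x * y)" using e by linarith
qed

lemma Bf_mono: "0 \<le> x \<Longrightarrow> x \<le> x' \<Longrightarrow> 0 \<le> y \<Longrightarrow> y \<le> y' \<Longrightarrow> Bf x y \<le> Bf x' y'"
  using Bf_mono1[of x x' y] Bf_mono2[of x' y y'] by linarith

lemma d2_alt: "0 \<le> x \<Longrightarrow> 0 \<le> y \<Longrightarrow> d2 x y = (x * (1 + x) * y^2) / ((1 + y + x * y) * (1 + y))"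
  unfolding d2_def by (simp add: field_simps)

lemma d2_mono1:
  assumes "0 \<le> x" "x \<le> x'" "0 \<le> y" shows "d2 x y \<le> d2 x' y"
  unfolding d2_alt[OF assms(1,3)] d2_alt[OF order_trans[OF assms(1,2)] assms(3)]
proof (rule frac_le)
  show "0 < (1 + y + x * y) * (1 + y)" "0 < (1 + y + x' * y) * (1 + y)" using assms
    by (auto intro!: add_pos_nonneg mult_pos_pos)
  have e: "x' * (1 + x') * y^2 * ((1 + y + x * y) * (1 + y)) - x * (1 + x) * y^2 * ((1 + y + x' * y) * (1 + y))
     = y^2 * (1 + y) * ((x' - x) * ((1 + y) * (1 + x + x') + x * x' * y))"
    by (simp add: algebra_simps power2_eq_square)
  have "y^2 * (1 + y) * ((x' - x) * ((1 + y) * (1 + x + x') + x * x' * y)) \<ge> 0" using assms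
    by (intro mult_nonneg_nonneg add_nonneg_nonneg) auto
  then show "x * (1 + x) * y^2 * ((1 + y + x' * y) * (1 + y)) \<le> x' * (1 + x') * y^2 * ((1 + y + x * y) * (1 + y))"
    using e by linarith
qed

lemma d2_mono2:
  assumes "0 \<le> x" "0 \<le> y" "y \<le> y'" shows "d2 x y \<le> d2 x y'"
  unfolding d2_alt[OF assms(1,2)] d2_alt[OF assms(1) order_trans[OF assms(2,3)]]
proof (rule frac_le)
  show "0 < (1 + y + x * y) * (1 + y)" "0 < (1 + y' + x * y') * (1 + y')" using assms
    by (auto intro!: add_pos_nonneg mult_pos_pos)
  have e: "x * (1 + x) * y'^2 * ((1 + y + x * y) * (1 + y)) - x * (1 + x) * y^2 * ((1 + y' + x * y') * (1 + y'))
     = x * (1 + x) * ((y' - y) * ((y' + y) + (2 + x) * y * y'))"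
    by (simp add: algebra_simps power2_eq_square)
  have "x * (1 + x) * ((y' - y) * ((y' + y) + (2 + x) * y * y')) \<ge> 0" using assms
    by (intro mult_nonneg_nonneg add_nonneg_nonneg) auto
  then show "x * (1 + x) * y^2 * ((1 + y' + x * y') * (1 + y')) \<le> x * (1 + x) * y'^2 * ((1 + y + x * y) * (1 + y))"
    using e by linarith
qed

lemma d2_mono: "0 \<le> x \<Longrightarrow> x \<le> x' \<Longrightarrow> 0 \<le> y \<Longrightarrow> y \<le> y' \<Longrightarrow> d2 x y \<le> d2 x' y'"
  using d2_mono1[of x x' y] d2_mono2[of x' y y'] by linarith

lemma d2_nn0: "0 \<le> x \<Longrightarrow> 0 \<le> y \<Longrightarrow> 0 \<le> d2 x y"
  unfolding d2_def by (simp add: add_nonneg_nonneg)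
lemma Bf_nn0: "0 \<le> x \<Longrightarrow> 0 \<le> y \<Longrightarrow> 0 \<le> Bf x y"
  unfolding Bf_def by (simp add: add_nonneg_nonneg)
lemma Af_nn0: "0 \<le> x \<Longrightarrow> 0 \<le> Af x"
  unfolding Af_def by (simp add: add_nonneg_nonneg)

lemma p_form: "y > 0 \<Longrightarrow> z > 0 \<Longrightarrow> pfun x y z = 2 + (Af y + Bf y z) * (2 - 7/10 * sqrt y)
   - d2 y z * (7/10 * sqrt y + 51/100 * sqrt y * sqrt z) - dstar x y"
  unfolding pfun_def dstar_def[of y z] by (simp add: d0_eq d1_eq real_sqrt_mult field_simps)

definition LB :: "real \<Rightarrow> real \<Rightarrow> real \<Rightarrow> real \<Rightarrow> real" where
 "LB b0 b1 c0 c1 = 2 + (Af (b0^2) + Bf (b0^2) (c0^2)) * (2 - 7/10 * b1)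
   - d2 (b1^2) (c1^2) * (7/10 * b1 + 51/100 * b1 * c1)
   - 1221/1000 * (10/7 * Af (149/100) + 10/7 * Bf (149/100) (b1^2) + d2 (149/100) (b1^2) * (10/7 - b0))"

lemma sqrt_M: "sqrt (149/100) \<le> 1221/1000"
  by (rule real_le_lsqrt) (auto simp: power2_eq_square)

lemma p_LB:
  assumes x: "0 < x" "x \<le> 149/100" and y: "0 < y" "b0^2 \<le> y" "y \<le> b1^2"
    and z: "0 < z" "c0^2 \<le> z" "z \<le> c1^2"
    and b: "0 \<le> b0" "b1 \<le> 10/7" and b1: "0 \<le> b1" and c: "0 \<le> c0" and c1: "0 \<le> c1"
  shows "LB b0 b1 c0 c1 \<le> pfun x y z"
proof -
  have sy: "b0 \<le> sqrt y" "sqrt y \<le> b1"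
    using y b b1 real_le_rsqrt[of b0 y] real_sqrt_le_mono[of y "b1^2"] by auto
  have sz: "c0 \<le> sqrt z" "sqrt z \<le> c1"
    using z c c1 real_le_rsqrt[of c0 z] real_sqrt_le_mono[of z "c1^2"] by auto
  have sx: "sqrt x \<le> 1221/1000" using x sqrt_M real_sqrt_le_mono[of x "149/100"] by linarith
  have syle: "10/7 - sqrt y \<ge> 0" using sy b by linarith
  have t1: "(Af (b0^2) + Bf (b0^2) (c0^2)) * (2 - 7/10 * b1) \<le> (Af y + Bf y z) * (2 - 7/10 * sqrt y)"
  proof (rule mult_mono)
    show "Af (b0^2) + Bf (b0^2) (c0^2) \<le> Af y + Bf y z"
      using Af_mono[of "b0^2" y] Bf_mono[of "b0^2" y "c0^2" z] y z by simp
    show "2 - 7/10 * b1 \<le> 2 - 7/10 * sqrt y" using sy by simp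
    show "0 \<le> Af y + Bf y z" using Af_nn0[of y] Bf_nn0[of y z] y z by simp
    show "0 \<le> 2 - 7/10 * b1" using b by simp
  qed
  have t2: "d2 y z * (7/10 * sqrt y + 51/100 * sqrt y * sqrt z) \<le> d2 (b1^2) (c1^2) * (7/10 * b1 + 51/100 * b1 * c1)"
  proof (rule mult_mono)
    show "d2 y z \<le> d2 (b1^2) (c1^2)" using d2_mono[of y "b1^2" z "c1^2"] y z by simp
    have "sqrt y * sqrt z \<le> b1 * c1" using sy sz b1 z by (intro mult_mono) auto
    then show "7/10 * sqrt y + 51/100 * sqrt y * sqrt z \<le> 7/10 * b1 + 51/100 * b1 * c1" using sy by linarith
    show "0 \<le> d2 (b1^2) (c1^2)" by (rule d2_nn0) auto
    show "0 \<le> 7/10 * sqrt y + 51/100 * sqrt y * sqrt z" using y z by (intro add_nonneg_nonneg mult_nonneg_nonneg) auto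
  qed
  have t3: "dstar x y \<le> 1221/1000 * (10/7 * Af (149/100) + 10/7 * Bf (149/100) (b1^2) + d2 (149/100) (b1^2) * (10/7 - b0))"
  proof -
    have e: "dstar x y = sqrt x * (10/7 * Af x + 10/7 * Bf x y + d2 x y * (10/7 - sqrt y))"
      using dstar_eq[of x y] x y by (simp add: algebra_simps)
    have "10/7 * Af x + 10/7 * Bf x y + d2 x y * (10/7 - sqrt y) \<le> 10/7 * Af (149/100) + 10/7 * Bf (149/100) (b1^2) + d2 (149/100) (b1^2) * (10/7 - b0)"
    proof -
      have "Af x \<le> Af (149/100)" using Af_mono x by simp
      moreover have "Bf x y \<le> Bf (149/100) (b1^2)" using Bf_mono[of x "149/100" y "b1^2"] x y by simp
      moreover have "d2 x y * (10/7 - sqrt y) \<le> d2 (149/100) (b1^2) * (10/7 - b0)"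
      proof (rule mult_mono)
        show "d2 x y \<le> d2 (149/100) (b1^2)" using d2_mono[of x "149/100" y "b1^2"] x y by simp
        show "10/7 - sqrt y \<le> 10/7 - b0" using sy by simp
        show "0 \<le> d2 (149/100) (b1^2)" by (rule d2_nn0) auto
        show "0 \<le> 10/7 - sqrt y" by (rule syle)
      qed
      ultimately show ?thesis by linarith
    qed
    moreover have "0 \<le> 10/7 * Af x + 10/7 * Bf x y + d2 x y * (10/7 - sqrt y)"
      using Af_nn0[of x] Bf_nn0[of x y] d2_nn0[of x y] syle x y by simp
    ultimately show ?thesis unfolding e using sx by (intro mult_mono) auto
  qed
  show ?thesis unfolding LB_def p_form[OF y(1) z(1)] using t1 t2 t3 by linarith
qed

lemma box2:
  assumes "0^2 \<le> y" "y \<le> (5/8)^2" "0^2 \<le> z" "z \<le> (5/8)^2"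
    and X: "0 < x" "x \<le> 149/100" "0 < y" "0 < z"
  shows "1/50 \<le> pfun x y z"
proof -
  have "1/50 \<le> LB 0 (5/8) 0 (5/8)" by (simp add: LB_def Af_def Bf_def d2_def power2_eq_square)
  also have "\<dots> \<le> pfun x y z" by (rule p_LB) (use assms in auto)
  finally show ?thesis .
qed

lemma box4:
  assumes "(5/8)^2 \<le> y" "y \<le> (15/16)^2" "0^2 \<le> z" "z \<le> (5/16)^2"
    and X: "0 < x" "x \<le> 149/100" "0 < y" "0 < z"
  shows "1/50 \<le> pfun x y z"
proof -
  have "1/50 \<le> LB (5/8) (15/16) 0 (5/16)" by (simp add: LB_def Af_def Bf_def d2_def power2_eq_square)
  also have "\<dots> \<le> pfun x y z" by (rule p_LB) (use assms in auto)
  finally show ?thesis .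
qed

lemma box5:
  assumes "(15/16)^2 \<le> y" "y \<le> (1221/1000)^2" "0^2 \<le> z" "z \<le> (5/16)^2"
    and X: "0 < x" "x \<le> 149/100" "0 < y" "0 < z"
  shows "1/50 \<le> pfun x y z"
proof -
  have "1/50 \<le> LB (15/16) (1221/1000) 0 (5/16)" by (simp add: LB_def Af_def Bf_def d2_def power2_eq_square)
  also have "\<dots> \<le> pfun x y z" by (rule p_LB) (use assms in auto)
  finally show ?thesis .
qed

lemma box6:
  assumes "(5/8)^2 \<le> y" "y \<le> (15/16)^2" "(5/16)^2 \<le> z" "z \<le> (5/8)^2"
    and X: "0 < x" "x \<le> 149/100" "0 < y" "0 < z"
  shows "1/50 \<le> pfun x y z"
proof -
  have "1/50 \<le> LB (5/8) (15/16) (5/16) (5/8)" by (simp add: LB_def Af_def Bf_def d2_def power2_eq_square)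
  also have "\<dots> \<le> pfun x y z" by (rule p_LB) (use assms in auto)
  finally show ?thesis .
qed

lemma box7:
  assumes "(15/16)^2 \<le> y" "y \<le> (1221/1000)^2" "(5/16)^2 \<le> z" "z \<le> (5/8)^2"
    and X: "0 < x" "x \<le> 149/100" "0 < y" "0 < z"
  shows "1/50 \<le> pfun x y z"
proof -
  have "1/50 \<le> LB (15/16) (1221/1000) (5/16) (5/8)" by (simp add: LB_def Af_def Bf_def d2_def power2_eq_square)
  also have "\<dots> \<le> pfun x y z" by (rule p_LB) (use assms in auto)
  finally show ?thesis .
qed

lemma box3:
  assumes "(5/8)^2 \<le> y" "y \<le> (1221/1000)^2" "0^2 \<le> z" "z \<le> (5/8)^2"
    and X: "0 < x" "x \<le> 149/100" "0 < y" "0 < z"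
  shows "1/50 \<le> pfun x y z"
proof -
  have "y \<le> (15/16)^2 \<or> (15/16)^2 \<le> y" "z \<le> (5/16)^2 \<or> (5/16)^2 \<le> z" by linarith+
  then show ?thesis using box4[OF _ _ _ _ X] box5[OF _ _ _ _ X] box6[OF _ _ _ _ X] box7[OF _ _ _ _ X] assms(1-4) by blast
qed

lemma box9:
  assumes "0^2 \<le> y" "y \<le> (5/16)^2" "(5/8)^2 \<le> z" "z \<le> (15/16)^2"
    and X: "0 < x" "x \<le> 149/100" "0 < y" "0 < z"
  shows "1/50 \<le> pfun x y z"
proof -
  have "1/50 \<le> LB 0 (5/16) (5/8) (15/16)" by (simp add: LB_def Af_def Bf_def d2_def power2_eq_square)
  also have "\<dots> \<le> pfun x y z" by (rule p_LB) (use assms in auto)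
  finally show ?thesis .
qed

lemma box10:
  assumes "(5/16)^2 \<le> y" "y \<le> (5/8)^2" "(5/8)^2 \<le> z" "z \<le> (15/16)^2"
    and X: "0 < x" "x \<le> 149/100" "0 < y" "0 < z"
  shows "1/50 \<le> pfun x y z"
proof -
  have "1/50 \<le> LB (5/16) (5/8) (5/8) (15/16)" by (simp add: LB_def Af_def Bf_def d2_def power2_eq_square)
  also have "\<dots> \<le> pfun x y z" by (rule p_LB) (use assms in auto)
  finally show ?thesis .
qed

lemma box11:
  assumes "0^2 \<le> y" "y \<le> (5/16)^2" "(15/16)^2 \<le> z" "z \<le> (1221/1000)^2"
    and X: "0 < x" "x \<le> 149/100" "0 < y" "0 < z"
  shows "1/50 \<le> pfun x y z"
proof -
  have "1/50 \<le> LB 0 (5/16) (15/16) (1221/1000)" by (simp add: LB_def Af_def Bf_def d2_def power2_eq_square)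
  also have "\<dots> \<le> pfun x y z" by (rule p_LB) (use assms in auto)
  finally show ?thesis .
qed

lemma box12:
  assumes "(5/16)^2 \<le> y" "y \<le> (5/8)^2" "(15/16)^2 \<le> z" "z \<le> (1221/1000)^2"
    and X: "0 < x" "x \<le> 149/100" "0 < y" "0 < z"
  shows "1/50 \<le> pfun x y z"
proof -
  have "1/50 \<le> LB (5/16) (5/8) (15/16) (1221/1000)" by (simp add: LB_def Af_def Bf_def d2_def power2_eq_square)
  also have "\<dots> \<le> pfun x y z" by (rule p_LB) (use assms in auto)
  finally show ?thesis .
qed

lemma box8:
  assumes "0^2 \<le> y" "y \<le> (5/8)^2" "(5/8)^2 \<le> z" "z \<le> (1221/1000)^2"
    and X: "0 < x" "x \<le> 149/100" "0 < y" "0 < z"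
  shows "1/50 \<le> pfun x y z"
proof -
  have "y \<le> (5/16)^2 \<or> (5/16)^2 \<le> y" "z \<le> (15/16)^2 \<or> (15/16)^2 \<le> z" by linarith+
  then show ?thesis using box9[OF _ _ _ _ X] box10[OF _ _ _ _ X] box11[OF _ _ _ _ X] box12[OF _ _ _ _ X] assms(1-4) by blast
qed

lemma box15:
  assumes "(5/8)^2 \<le> y" "y \<le> (25/32)^2" "(5/8)^2 \<le> z" "z \<le> (25/32)^2"
    and X: "0 < x" "x \<le> 149/100" "0 < y" "0 < z"
  shows "1/50 \<le> pfun x y z"
proof -
  have "1/50 \<le> LB (5/8) (25/32) (5/8) (25/32)" by (simp add: LB_def Af_def Bf_def d2_def power2_eq_square)
  also have "\<dots> \<le> pfun x y z" by (rule p_LB) (use assms in auto)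
  finally show ?thesis .
qed

lemma box16:
  assumes "(25/32)^2 \<le> y" "y \<le> (15/16)^2" "(5/8)^2 \<le> z" "z \<le> (25/32)^2"
    and X: "0 < x" "x \<le> 149/100" "0 < y" "0 < z"
  shows "1/50 \<le> pfun x y z"
proof -
  have "1/50 \<le> LB (25/32) (15/16) (5/8) (25/32)" by (simp add: LB_def Af_def Bf_def d2_def power2_eq_square)
  also have "\<dots> \<le> pfun x y z" by (rule p_LB) (use assms in auto)
  finally show ?thesis .
qed

lemma box17:
  assumes "(5/8)^2 \<le> y" "y \<le> (25/32)^2" "(25/32)^2 \<le> z" "z \<le> (15/16)^2"
    and X: "0 < x" "x \<le> 149/100" "0 < y" "0 < z"
  shows "1/50 \<le> pfun x y z"
proof -
  have "1/50 \<le> LB (5/8) (25/32) (25/32) (15/16)" by (simp add: LB_def Af_def Bf_def d2_def power2_eq_square)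
  also have "\<dots> \<le> pfun x y z" by (rule p_LB) (use assms in auto)
  finally show ?thesis .
qed

lemma box18:
  assumes "(25/32)^2 \<le> y" "y \<le> (15/16)^2" "(25/32)^2 \<le> z" "z \<le> (15/16)^2"
    and X: "0 < x" "x \<le> 149/100" "0 < y" "0 < z"
  shows "1/50 \<le> pfun x y z"
proof -
  have "1/50 \<le> LB (25/32) (15/16) (25/32) (15/16)" by (simp add: LB_def Af_def Bf_def d2_def power2_eq_square)
  also have "\<dots> \<le> pfun x y z" by (rule p_LB) (use assms in auto)
  finally show ?thesis .
qed

lemma box14:
  assumes "(5/8)^2 \<le> y" "y \<le> (15/16)^2" "(5/8)^2 \<le> z" "z \<le> (15/16)^2"
    and X: "0 < x" "x \<le> 149/100" "0 < y" "0 < z"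
  shows "1/50 \<le> pfun x y z"
proof -
  have "y \<le> (25/32)^2 \<or> (25/32)^2 \<le> y" "z \<le> (25/32)^2 \<or> (25/32)^2 \<le> z" by linarith+
  then show ?thesis using box15[OF _ _ _ _ X] box16[OF _ _ _ _ X] box17[OF _ _ _ _ X] box18[OF _ _ _ _ X] assms(1-4) by blast
qed

lemma box20:
  assumes "(15/16)^2 \<le> y" "y \<le> (35/32)^2" "(5/8)^2 \<le> z" "z \<le> (25/32)^2"
    and X: "0 < x" "x \<le> 149/100" "0 < y" "0 < z"
  shows "1/50 \<le> pfun x y z"
proof -
  have "1/50 \<le> LB (15/16) (35/32) (5/8) (25/32)" by (simp add: LB_def Af_def Bf_def d2_def power2_eq_square)
  also have "\<dots> \<le> pfun x y z" by (rule p_LB) (use assms in auto)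
  finally show ?thesis .
qed

lemma box21:
  assumes "(35/32)^2 \<le> y" "y \<le> (1221/1000)^2" "(5/8)^2 \<le> z" "z \<le> (25/32)^2"
    and X: "0 < x" "x \<le> 149/100" "0 < y" "0 < z"
  shows "1/50 \<le> pfun x y z"
proof -
  have "1/50 \<le> LB (35/32) (1221/1000) (5/8) (25/32)" by (simp add: LB_def Af_def Bf_def d2_def power2_eq_square)
  also have "\<dots> \<le> pfun x y z" by (rule p_LB) (use assms in auto)
  finally show ?thesis .
qed

lemma box22:
  assumes "(15/16)^2 \<le> y" "y \<le> (35/32)^2" "(25/32)^2 \<le> z" "z \<le> (15/16)^2"
    and X: "0 < x" "x \<le> 149/100" "0 < y" "0 < z"
  shows "1/50 \<le> pfun x y z"
proof -
  have "1/50 \<le> LB (15/16) (35/32) (25/32) (15/16)" by (simp add: LB_def Af_def Bf_def d2_def power2_eq_square)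
  also have "\<dots> \<le> pfun x y z" by (rule p_LB) (use assms in auto)
  finally show ?thesis .
qed

lemma box23:
  assumes "(35/32)^2 \<le> y" "y \<le> (1221/1000)^2" "(25/32)^2 \<le> z" "z \<le> (15/16)^2"
    and X: "0 < x" "x \<le> 149/100" "0 < y" "0 < z"
  shows "1/50 \<le> pfun x y z"
proof -
  have "1/50 \<le> LB (35/32) (1221/1000) (25/32) (15/16)" by (simp add: LB_def Af_def Bf_def d2_def power2_eq_square)
  also have "\<dots> \<le> pfun x y z" by (rule p_LB) (use assms in auto)
  finally show ?thesis .
qed

lemma box19:
  assumes "(15/16)^2 \<le> y" "y \<le> (1221/1000)^2" "(5/8)^2 \<le> z" "z \<le> (15/16)^2"
    and X: "0 < x" "x \<le> 149/100" "0 < y" "0 < z"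
  shows "1/50 \<le> pfun x y z"
proof -
  have "y \<le> (35/32)^2 \<or> (35/32)^2 \<le> y" "z \<le> (25/32)^2 \<or> (25/32)^2 \<le> z" by linarith+
  then show ?thesis using box20[OF _ _ _ _ X] box21[OF _ _ _ _ X] box22[OF _ _ _ _ X] box23[OF _ _ _ _ X] assms(1-4) by blast
qed

lemma box25:
  assumes "(5/8)^2 \<le> y" "y \<le> (25/32)^2" "(15/16)^2 \<le> z" "z \<le> (35/32)^2"
    and X: "0 < x" "x \<le> 149/100" "0 < y" "0 < z"
  shows "1/50 \<le> pfun x y z"
proof -
  have "1/50 \<le> LB (5/8) (25/32) (15/16) (35/32)" by (simp add: LB_def Af_def Bf_def d2_def power2_eq_square)
  also have "\<dots> \<le> pfun x y z" by (rule p_LB) (use assms in auto)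
  finally show ?thesis .
qed

lemma box26:
  assumes "(25/32)^2 \<le> y" "y \<le> (15/16)^2" "(15/16)^2 \<le> z" "z \<le> (35/32)^2"
    and X: "0 < x" "x \<le> 149/100" "0 < y" "0 < z"
  shows "1/50 \<le> pfun x y z"
proof -
  have "1/50 \<le> LB (25/32) (15/16) (15/16) (35/32)" by (simp add: LB_def Af_def Bf_def d2_def power2_eq_square)
  also have "\<dots> \<le> pfun x y z" by (rule p_LB) (use assms in auto)
  finally show ?thesis .
qed

lemma box27:
  assumes "(5/8)^2 \<le> y" "y \<le> (25/32)^2" "(35/32)^2 \<le> z" "z \<le> (1221/1000)^2"
    and X: "0 < x" "x \<le> 149/100" "0 < y" "0 < z"
  shows "1/50 \<le> pfun x y z"
proof -
  have "1/50 \<le> LB (5/8) (25/32) (35/32) (1221/1000)" by (simp add: LB_def Af_def Bf_def d2_def power2_eq_square)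
  also have "\<dots> \<le> pfun x y z" by (rule p_LB) (use assms in auto)
  finally show ?thesis .
qed

lemma box28:
  assumes "(25/32)^2 \<le> y" "y \<le> (15/16)^2" "(35/32)^2 \<le> z" "z \<le> (1221/1000)^2"
    and X: "0 < x" "x \<le> 149/100" "0 < y" "0 < z"
  shows "1/50 \<le> pfun x y z"
proof -
  have "1/50 \<le> LB (25/32) (15/16) (35/32) (1221/1000)" by (simp add: LB_def Af_def Bf_def d2_def power2_eq_square)
  also have "\<dots> \<le> pfun x y z" by (rule p_LB) (use assms in auto)
  finally show ?thesis .
qed

lemma box24:
  assumes "(5/8)^2 \<le> y" "y \<le> (15/16)^2" "(15/16)^2 \<le> z" "z \<le> (1221/1000)^2"
    and X: "0 < x" "x \<le> 149/100" "0 < y" "0 < z"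
  shows "1/50 \<le> pfun x y z"
proof -
  have "y \<le> (25/32)^2 \<or> (25/32)^2 \<le> y" "z \<le> (35/32)^2 \<or> (35/32)^2 \<le> z" by linarith+
  then show ?thesis using box25[OF _ _ _ _ X] box26[OF _ _ _ _ X] box27[OF _ _ _ _ X] box28[OF _ _ _ _ X] assms(1-4) by blast
qed

lemma box30:
  assumes "(15/16)^2 \<le> y" "y \<le> (35/32)^2" "(15/16)^2 \<le> z" "z \<le> (35/32)^2"
    and X: "0 < x" "x \<le> 149/100" "0 < y" "0 < z"
  shows "1/50 \<le> pfun x y z"
proof -
  have "1/50 \<le> LB (15/16) (35/32) (15/16) (35/32)" by (simp add: LB_def Af_def Bf_def d2_def power2_eq_square)
  also have "\<dots> \<le> pfun x y z" by (rule p_LB) (use assms in auto)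
  finally show ?thesis .
qed

lemma box32:
  assumes "(35/32)^2 \<le> y" "y \<le> (37/32)^2" "(15/16)^2 \<le> z" "z \<le> (1)^2"
    and X: "0 < x" "x \<le> 149/100" "0 < y" "0 < z"
  shows "1/50 \<le> pfun x y z"
proof -
  have "1/50 \<le> LB (35/32) (37/32) (15/16) (1)" by (simp add: LB_def Af_def Bf_def d2_def power2_eq_square)
  also have "\<dots> \<le> pfun x y z" by (rule p_LB) (use assms in auto)
  finally show ?thesis .
qed

lemma box33:
  assumes "(37/32)^2 \<le> y" "y \<le> (1221/1000)^2" "(15/16)^2 \<le> z" "z \<le> (1)^2"
    and X: "0 < x" "x \<le> 149/100" "0 < y" "0 < z"
  shows "1/50 \<le> pfun x y z"
proof -
  have "1/50 \<le> LB (37/32) (1221/1000) (15/16) (1)" by (simp add: LB_def Af_def Bf_def d2_def power2_eq_square)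
  also have "\<dots> \<le> pfun x y z" by (rule p_LB) (use assms in auto)
  finally show ?thesis .
qed

lemma box34:
  assumes "(35/32)^2 \<le> y" "y \<le> (37/32)^2" "(1)^2 \<le> z" "z \<le> (35/32)^2"
    and X: "0 < x" "x \<le> 149/100" "0 < y" "0 < z"
  shows "1/50 \<le> pfun x y z"
proof -
  have "1/50 \<le> LB (35/32) (37/32) (1) (35/32)" by (simp add: LB_def Af_def Bf_def d2_def power2_eq_square)
  also have "\<dots> \<le> pfun x y z" by (rule p_LB) (use assms in auto)
  finally show ?thesis .
qed

lemma box35:
  assumes "(37/32)^2 \<le> y" "y \<le> (1221/1000)^2" "(1)^2 \<le> z" "z \<le> (35/32)^2"
    and X: "0 < x" "x \<le> 149/100" "0 < y" "0 < z"
  shows "1/50 \<le> pfun x y z"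
proof -
  have "1/50 \<le> LB (37/32) (1221/1000) (1) (35/32)" by (simp add: LB_def Af_def Bf_def d2_def power2_eq_square)
  also have "\<dots> \<le> pfun x y z" by (rule p_LB) (use assms in auto)
  finally show ?thesis .
qed

lemma box31:
  assumes "(35/32)^2 \<le> y" "y \<le> (1221/1000)^2" "(15/16)^2 \<le> z" "z \<le> (35/32)^2"
    and X: "0 < x" "x \<le> 149/100" "0 < y" "0 < z"
  shows "1/50 \<le> pfun x y z"
proof -
  have "y \<le> (37/32)^2 \<or> (37/32)^2 \<le> y" "z \<le> (1)^2 \<or> (1)^2 \<le> z" by linarith+
  then show ?thesis using box32[OF _ _ _ _ X] box33[OF _ _ _ _ X] box34[OF _ _ _ _ X] box35[OF _ _ _ _ X] assms(1-4) by blast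
qed

lemma box37:
  assumes "(15/16)^2 \<le> y" "y \<le> (1)^2" "(35/32)^2 \<le> z" "z \<le> (37/32)^2"
    and X: "0 < x" "x \<le> 149/100" "0 < y" "0 < z"
  shows "1/50 \<le> pfun x y z"
proof -
  have "1/50 \<le> LB (15/16) (1) (35/32) (37/32)" by (simp add: LB_def Af_def Bf_def d2_def power2_eq_square)
  also have "\<dots> \<le> pfun x y z" by (rule p_LB) (use assms in auto)
  finally show ?thesis .
qed

lemma box38:
  assumes "(1)^2 \<le> y" "y \<le> (35/32)^2" "(35/32)^2 \<le> z" "z \<le> (37/32)^2"
    and X: "0 < x" "x \<le> 149/100" "0 < y" "0 < z"
  shows "1/50 \<le> pfun x y z"
proof -
  have "1/50 \<le> LB (1) (35/32) (35/32) (37/32)" by (simp add: LB_def Af_def Bf_def d2_def power2_eq_square)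
  also have "\<dots> \<le> pfun x y z" by (rule p_LB) (use assms in auto)
  finally show ?thesis .
qed

lemma box39:
  assumes "(15/16)^2 \<le> y" "y \<le> (1)^2" "(37/32)^2 \<le> z" "z \<le> (1221/1000)^2"
    and X: "0 < x" "x \<le> 149/100" "0 < y" "0 < z"
  shows "1/50 \<le> pfun x y z"
proof -
  have "1/50 \<le> LB (15/16) (1) (37/32) (1221/1000)" by (simp add: LB_def Af_def Bf_def d2_def power2_eq_square)
  also have "\<dots> \<le> pfun x y z" by (rule p_LB) (use assms in auto)
  finally show ?thesis .
qed

lemma box40:
  assumes "(1)^2 \<le> y" "y \<le> (35/32)^2" "(37/32)^2 \<le> z" "z \<le> (1221/1000)^2"
    and X: "0 < x" "x \<le> 149/100" "0 < y" "0 < z"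
  shows "1/50 \<le> pfun x y z"
proof -
  have "1/50 \<le> LB (1) (35/32) (37/32) (1221/1000)" by (simp add: LB_def Af_def Bf_def d2_def power2_eq_square)
  also have "\<dots> \<le> pfun x y z" by (rule p_LB) (use assms in auto)
  finally show ?thesis .
qed

lemma box36:
  assumes "(15/16)^2 \<le> y" "y \<le> (35/32)^2" "(35/32)^2 \<le> z" "z \<le> (1221/1000)^2"
    and X: "0 < x" "x \<le> 149/100" "0 < y" "0 < z"
  shows "1/50 \<le> pfun x y z"
proof -
  have "y \<le> (1)^2 \<or> (1)^2 \<le> y" "z \<le> (37/32)^2 \<or> (37/32)^2 \<le> z" by linarith+
  then show ?thesis using box37[OF _ _ _ _ X] box38[OF _ _ _ _ X] box39[OF _ _ _ _ X] box40[OF _ _ _ _ X] assms(1-4) by blast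
qed

lemma box42:
  assumes "(35/32)^2 \<le> y" "y \<le> (37/32)^2" "(35/32)^2 \<le> z" "z \<le> (37/32)^2"
    and X: "0 < x" "x \<le> 149/100" "0 < y" "0 < z"
  shows "1/50 \<le> pfun x y z"
proof -
  have "1/50 \<le> LB (35/32) (37/32) (35/32) (37/32)" by (simp add: LB_def Af_def Bf_def d2_def power2_eq_square)
  also have "\<dots> \<le> pfun x y z" by (rule p_LB) (use assms in auto)
  finally show ?thesis .
qed

lemma box44:
  assumes "(37/32)^2 \<le> y" "y \<le> (19/16)^2" "(35/32)^2 \<le> z" "z \<le> (9/8)^2"
    and X: "0 < x" "x \<le> 149/100" "0 < y" "0 < z"
  shows "1/50 \<le> pfun x y z"
proof -
  have "1/50 \<le> LB (37/32) (19/16) (35/32) (9/8)" by (simp add: LB_def Af_def Bf_def d2_def power2_eq_square)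
  also have "\<dots> \<le> pfun x y z" by (rule p_LB) (use assms in auto)
  finally show ?thesis .
qed

lemma box45:
  assumes "(19/16)^2 \<le> y" "y \<le> (1221/1000)^2" "(35/32)^2 \<le> z" "z \<le> (9/8)^2"
    and X: "0 < x" "x \<le> 149/100" "0 < y" "0 < z"
  shows "1/50 \<le> pfun x y z"
proof -
  have "1/50 \<le> LB (19/16) (1221/1000) (35/32) (9/8)" by (simp add: LB_def Af_def Bf_def d2_def power2_eq_square)
  also have "\<dots> \<le> pfun x y z" by (rule p_LB) (use assms in auto)
  finally show ?thesis .
qed

lemma box46:
  assumes "(37/32)^2 \<le> y" "y \<le> (19/16)^2" "(9/8)^2 \<le> z" "z \<le> (37/32)^2"
    and X: "0 < x" "x \<le> 149/100" "0 < y" "0 < z"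
  shows "1/50 \<le> pfun x y z"
proof -
  have "1/50 \<le> LB (37/32) (19/16) (9/8) (37/32)" by (simp add: LB_def Af_def Bf_def d2_def power2_eq_square)
  also have "\<dots> \<le> pfun x y z" by (rule p_LB) (use assms in auto)
  finally show ?thesis .
qed

lemma box47:
  assumes "(19/16)^2 \<le> y" "y \<le> (1221/1000)^2" "(9/8)^2 \<le> z" "z \<le> (37/32)^2"
    and X: "0 < x" "x \<le> 149/100" "0 < y" "0 < z"
  shows "1/50 \<le> pfun x y z"
proof -
  have "1/50 \<le> LB (19/16) (1221/1000) (9/8) (37/32)" by (simp add: LB_def Af_def Bf_def d2_def power2_eq_square)
  also have "\<dots> \<le> pfun x y z" by (rule p_LB) (use assms in auto)
  finally show ?thesis .
qed

lemma box43:
  assumes "(37/32)^2 \<le> y" "y \<le> (1221/1000)^2" "(35/32)^2 \<le> z" "z \<le> (37/32)^2"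
    and X: "0 < x" "x \<le> 149/100" "0 < y" "0 < z"
  shows "1/50 \<le> pfun x y z"
proof -
  have "y \<le> (19/16)^2 \<or> (19/16)^2 \<le> y" "z \<le> (9/8)^2 \<or> (9/8)^2 \<le> z" by linarith+
  then show ?thesis using box44[OF _ _ _ _ X] box45[OF _ _ _ _ X] box46[OF _ _ _ _ X] box47[OF _ _ _ _ X] assms(1-4) by blast
qed

lemma box48:
  assumes "(35/32)^2 \<le> y" "y \<le> (37/32)^2" "(37/32)^2 \<le> z" "z \<le> (1221/1000)^2"
    and X: "0 < x" "x \<le> 149/100" "0 < y" "0 < z"
  shows "1/50 \<le> pfun x y z"
proof -
  have "1/50 \<le> LB (35/32) (37/32) (37/32) (1221/1000)" by (simp add: LB_def Af_def Bf_def d2_def power2_eq_square)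
  also have "\<dots> \<le> pfun x y z" by (rule p_LB) (use assms in auto)
  finally show ?thesis .
qed

lemma box50:
  assumes "(37/32)^2 \<le> y" "y \<le> (19/16)^2" "(37/32)^2 \<le> z" "z \<le> (19/16)^2"
    and X: "0 < x" "x \<le> 149/100" "0 < y" "0 < z"
  shows "1/50 \<le> pfun x y z"
proof -
  have "1/50 \<le> LB (37/32) (19/16) (37/32) (19/16)" by (simp add: LB_def Af_def Bf_def d2_def power2_eq_square)
  also have "\<dots> \<le> pfun x y z" by (rule p_LB) (use assms in auto)
  finally show ?thesis .
qed

lemma box51:
  assumes "(19/16)^2 \<le> y" "y \<le> (1221/1000)^2" "(37/32)^2 \<le> z" "z \<le> (19/16)^2"
    and X: "0 < x" "x \<le> 149/100" "0 < y" "0 < z"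
  shows "1/50 \<le> pfun x y z"
proof -
  have "1/50 \<le> LB (19/16) (1221/1000) (37/32) (19/16)" by (simp add: LB_def Af_def Bf_def d2_def power2_eq_square)
  also have "\<dots> \<le> pfun x y z" by (rule p_LB) (use assms in auto)
  finally show ?thesis .
qed

lemma box52:
  assumes "(37/32)^2 \<le> y" "y \<le> (19/16)^2" "(19/16)^2 \<le> z" "z \<le> (1221/1000)^2"
    and X: "0 < x" "x \<le> 149/100" "0 < y" "0 < z"
  shows "1/50 \<le> pfun x y z"
proof -
  have "1/50 \<le> LB (37/32) (19/16) (19/16) (1221/1000)" by (simp add: LB_def Af_def Bf_def d2_def power2_eq_square)
  also have "\<dots> \<le> pfun x y z" by (rule p_LB) (use assms in auto)
  finally show ?thesis .
qed

lemma box55: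
  assumes "(19/16)^2 \<le> y" "y \<le> (77/64)^2" "(19/16)^2 \<le> z" "z \<le> (77/64)^2"
    and X: "0 < x" "x \<le> 149/100" "0 < y" "0 < z"
  shows "1/50 \<le> pfun x y z"
proof -
  have "1/50 \<le> LB (19/16) (77/64) (19/16) (77/64)" by (simp add: LB_def Af_def Bf_def d2_def power2_eq_square)
  also have "\<dots> \<le> pfun x y z" by (rule p_LB) (use assms in auto)
  finally show ?thesis .
qed

lemma box56:
  assumes "(77/64)^2 \<le> y" "y \<le> (39/32)^2" "(19/16)^2 \<le> z" "z \<le> (77/64)^2"
    and X: "0 < x" "x \<le> 149/100" "0 < y" "0 < z"
  shows "1/50 \<le> pfun x y z"
proof -
  have "1/50 \<le> LB (77/64) (39/32) (19/16) (77/64)" by (simp add: LB_def Af_def Bf_def d2_def power2_eq_square)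
  also have "\<dots> \<le> pfun x y z" by (rule p_LB) (use assms in auto)
  finally show ?thesis .
qed

lemma box57:
  assumes "(19/16)^2 \<le> y" "y \<le> (77/64)^2" "(77/64)^2 \<le> z" "z \<le> (39/32)^2"
    and X: "0 < x" "x \<le> 149/100" "0 < y" "0 < z"
  shows "1/50 \<le> pfun x y z"
proof -
  have "1/50 \<le> LB (19/16) (77/64) (77/64) (39/32)" by (simp add: LB_def Af_def Bf_def d2_def power2_eq_square)
  also have "\<dots> \<le> pfun x y z" by (rule p_LB) (use assms in auto)
  finally show ?thesis .
qed

lemma box58:
  assumes "(77/64)^2 \<le> y" "y \<le> (39/32)^2" "(77/64)^2 \<le> z" "z \<le> (39/32)^2"
    and X: "0 < x" "x \<le> 149/100" "0 < y" "0 < z"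
  shows "1/50 \<le> pfun x y z"
proof -
  have "1/50 \<le> LB (77/64) (39/32) (77/64) (39/32)" by (simp add: LB_def Af_def Bf_def d2_def power2_eq_square)
  also have "\<dots> \<le> pfun x y z" by (rule p_LB) (use assms in auto)
  finally show ?thesis .
qed

lemma box54:
  assumes "(19/16)^2 \<le> y" "y \<le> (39/32)^2" "(19/16)^2 \<le> z" "z \<le> (39/32)^2"
    and X: "0 < x" "x \<le> 149/100" "0 < y" "0 < z"
  shows "1/50 \<le> pfun x y z"
proof -
  have "y \<le> (77/64)^2 \<or> (77/64)^2 \<le> y" "z \<le> (77/64)^2 \<or> (77/64)^2 \<le> z" by linarith+
  then show ?thesis using box55[OF _ _ _ _ X] box56[OF _ _ _ _ X] box57[OF _ _ _ _ X] box58[OF _ _ _ _ X] assms(1-4) by blast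
qed

lemma box59:
  assumes "(39/32)^2 \<le> y" "y \<le> (1221/1000)^2" "(19/16)^2 \<le> z" "z \<le> (39/32)^2"
    and X: "0 < x" "x \<le> 149/100" "0 < y" "0 < z"
  shows "1/50 \<le> pfun x y z"
proof -
  have "1/50 \<le> LB (39/32) (1221/1000) (19/16) (39/32)" by (simp add: LB_def Af_def Bf_def d2_def power2_eq_square)
  also have "\<dots> \<le> pfun x y z" by (rule p_LB) (use assms in auto)
  finally show ?thesis .
qed

lemma box61:
  assumes "(19/16)^2 \<le> y" "y \<le> (77/64)^2" "(39/32)^2 \<le> z" "z \<le> (9759/8000)^2"
    and X: "0 < x" "x \<le> 149/100" "0 < y" "0 < z"
  shows "1/50 \<le> pfun x y z"
proof -
  have "1/50 \<le> LB (19/16) (77/64) (39/32) (9759/8000)" by (simp add: LB_def Af_def Bf_def d2_def power2_eq_square)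
  also have "\<dots> \<le> pfun x y z" by (rule p_LB) (use assms in auto)
  finally show ?thesis .
qed

lemma box62:
  assumes "(77/64)^2 \<le> y" "y \<le> (39/32)^2" "(39/32)^2 \<le> z" "z \<le> (9759/8000)^2"
    and X: "0 < x" "x \<le> 149/100" "0 < y" "0 < z"
  shows "1/50 \<le> pfun x y z"
proof -
  have "1/50 \<le> LB (77/64) (39/32) (39/32) (9759/8000)" by (simp add: LB_def Af_def Bf_def d2_def power2_eq_square)
  also have "\<dots> \<le> pfun x y z" by (rule p_LB) (use assms in auto)
  finally show ?thesis .
qed

lemma box63:
  assumes "(19/16)^2 \<le> y" "y \<le> (77/64)^2" "(9759/8000)^2 \<le> z" "z \<le> (1221/1000)^2"
    and X: "0 < x" "x \<le> 149/100" "0 < y" "0 < z"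
  shows "1/50 \<le> pfun x y z"
proof -
  have "1/50 \<le> LB (19/16) (77/64) (9759/8000) (1221/1000)" by (simp add: LB_def Af_def Bf_def d2_def power2_eq_square)
  also have "\<dots> \<le> pfun x y z" by (rule p_LB) (use assms in auto)
  finally show ?thesis .
qed

lemma box64:
  assumes "(77/64)^2 \<le> y" "y \<le> (39/32)^2" "(9759/8000)^2 \<le> z" "z \<le> (1221/1000)^2"
    and X: "0 < x" "x \<le> 149/100" "0 < y" "0 < z"
  shows "1/50 \<le> pfun x y z"
proof -
  have "1/50 \<le> LB (77/64) (39/32) (9759/8000) (1221/1000)" by (simp add: LB_def Af_def Bf_def d2_def power2_eq_square)
  also have "\<dots> \<le> pfun x y z" by (rule p_LB) (use assms in auto)
  finally show ?thesis .
qed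

lemma box60:
  assumes "(19/16)^2 \<le> y" "y \<le> (39/32)^2" "(39/32)^2 \<le> z" "z \<le> (1221/1000)^2"
    and X: "0 < x" "x \<le> 149/100" "0 < y" "0 < z"
  shows "1/50 \<le> pfun x y z"
proof -
  have "y \<le> (77/64)^2 \<or> (77/64)^2 \<le> y" "z \<le> (9759/8000)^2 \<or> (9759/8000)^2 \<le> z" by linarith+
  then show ?thesis using box61[OF _ _ _ _ X] box62[OF _ _ _ _ X] box63[OF _ _ _ _ X] box64[OF _ _ _ _ X] assms(1-4) by blast
qed

lemma box65:
  assumes "(39/32)^2 \<le> y" "y \<le> (1221/1000)^2" "(39/32)^2 \<le> z" "z \<le> (1221/1000)^2"
    and X: "0 < x" "x \<le> 149/100" "0 < y" "0 < z"
  shows "1/50 \<le> pfun x y z"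
proof -
  have "1/50 \<le> LB (39/32) (1221/1000) (39/32) (1221/1000)" by (simp add: LB_def Af_def Bf_def d2_def power2_eq_square)
  also have "\<dots> \<le> pfun x y z" by (rule p_LB) (use assms in auto)
  finally show ?thesis .
qed

lemma box53:
  assumes "(19/16)^2 \<le> y" "y \<le> (1221/1000)^2" "(19/16)^2 \<le> z" "z \<le> (1221/1000)^2"
    and X: "0 < x" "x \<le> 149/100" "0 < y" "0 < z"
  shows "1/50 \<le> pfun x y z"
proof -
  have "y \<le> (39/32)^2 \<or> (39/32)^2 \<le> y" "z \<le> (39/32)^2 \<or> (39/32)^2 \<le> z" by linarith+
  then show ?thesis using box54[OF _ _ _ _ X] box59[OF _ _ _ _ X] box60[OF _ _ _ _ X] box65[OF _ _ _ _ X] assms(1-4) by blast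
qed

lemma box49:
  assumes "(37/32)^2 \<le> y" "y \<le> (1221/1000)^2" "(37/32)^2 \<le> z" "z \<le> (1221/1000)^2"
    and X: "0 < x" "x \<le> 149/100" "0 < y" "0 < z"
  shows "1/50 \<le> pfun x y z"
proof -
  have "y \<le> (19/16)^2 \<or> (19/16)^2 \<le> y" "z \<le> (19/16)^2 \<or> (19/16)^2 \<le> z" by linarith+
  then show ?thesis using box50[OF _ _ _ _ X] box51[OF _ _ _ _ X] box52[OF _ _ _ _ X] box53[OF _ _ _ _ X] assms(1-4) by blast
qed

lemma box41:
  assumes "(35/32)^2 \<le> y" "y \<le> (1221/1000)^2" "(35/32)^2 \<le> z" "z \<le> (1221/1000)^2"
    and X: "0 < x" "x \<le> 149/100" "0 < y" "0 < z"
  shows "1/50 \<le> pfun x y z"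
proof -
  have "y \<le> (37/32)^2 \<or> (37/32)^2 \<le> y" "z \<le> (37/32)^2 \<or> (37/32)^2 \<le> z" by linarith+
  then show ?thesis using box42[OF _ _ _ _ X] box43[OF _ _ _ _ X] box48[OF _ _ _ _ X] box49[OF _ _ _ _ X] assms(1-4) by blast
qed

lemma box29:
  assumes "(15/16)^2 \<le> y" "y \<le> (1221/1000)^2" "(15/16)^2 \<le> z" "z \<le> (1221/1000)^2"
    and X: "0 < x" "x \<le> 149/100" "0 < y" "0 < z"
  shows "1/50 \<le> pfun x y z"
proof -
  have "y \<le> (35/32)^2 \<or> (35/32)^2 \<le> y" "z \<le> (35/32)^2 \<or> (35/32)^2 \<le> z" by linarith+
  then show ?thesis using box30[OF _ _ _ _ X] box31[OF _ _ _ _ X] box36[OF _ _ _ _ X] box41[OF _ _ _ _ X] assms(1-4) by blast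
qed

lemma box13:
  assumes "(5/8)^2 \<le> y" "y \<le> (1221/1000)^2" "(5/8)^2 \<le> z" "z \<le> (1221/1000)^2"
    and X: "0 < x" "x \<le> 149/100" "0 < y" "0 < z"
  shows "1/50 \<le> pfun x y z"
proof -
  have "y \<le> (15/16)^2 \<or> (15/16)^2 \<le> y" "z \<le> (15/16)^2 \<or> (15/16)^2 \<le> z" by linarith+
  then show ?thesis using box14[OF _ _ _ _ X] box19[OF _ _ _ _ X] box24[OF _ _ _ _ X] box29[OF _ _ _ _ X] assms(1-4) by blast
qed

lemma box1:
  assumes "0^2 \<le> y" "y \<le> (1221/1000)^2" "0^2 \<le> z" "z \<le> (1221/1000)^2"
    and X: "0 < x" "x \<le> 149/100" "0 < y" "0 < z"
  shows "1/50 \<le> pfun x y z"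
proof -
  have "y \<le> (5/8)^2 \<or> (5/8)^2 \<le> y" "z \<le> (5/8)^2 \<or> (5/8)^2 \<le> z" by linarith+
  then show ?thesis using box2[OF _ _ _ _ X] box3[OF _ _ _ _ X] box8[OF _ _ _ _ X] box13[OF _ _ _ _ X] assms(1-4) by blast
qed

lemma p_box: assumes "0 < x" "x \<le> 149/100" "0 < y" "y \<le> 149/100" "0 < z" "z \<le> 149/100"
  shows "1/50 \<le> pfun x y z"
  by (rule box1) (use assms in \<open>auto simp: power2_eq_square\<close>)

lemma q_nn:
  assumes x: "0 < x" "x < Re_crit" and y: "0 < y" "y < Re_crit" and z: "0 < z" "z \<le> 2"
  shows "0 \<le> qfun x y z"
proof -
  define m where "m = max x y"
  have m: "0 < m" "m < Re_crit" "x \<le> m" "y \<le> m" using x y unfolding m_def by auto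
  have fm: "fR m > 0" using fR_pos m by simp
  have key: "sqrt m * (m * m * (1 + m) / (1 + m + m * m)) \<le> 10/7"
  proof -
    have "m^2 * sqrt m / (m^2 + m + 1) < 10 / (7 * (m + 1))" using fm unfolding fR_def by simp
    then have "m^2 * sqrt m / (m^2 + m + 1) * (m + 1) < 10 / (7 * (m + 1)) * (m + 1)"
      using m by (intro mult_strict_right_mono) auto
    also have "\<dots> = 10/7" using m by (simp add: field_simps)
    finally have "m^2 * sqrt m / (m^2 + m + 1) * (m + 1) < 10/7" .
    moreover have "m^2 * sqrt m / (m^2 + m + 1) * (m + 1) = sqrt m * (m * m * (1 + m) / (1 + m + m * m))"
      by (simp add: field_simps power2_eq_square)
    ultimately show ?thesis by linarith
  qed
  have e: "sqrt (x * y) * d2 x y = sqrt y * Af y * (sqrt x * (x * y * (1 + x) / (1 + y + x * y)))"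
    unfolding d2_def Af_def using x y by (simp add: real_sqrt_mult field_simps power2_eq_square)
  have k: "sqrt x * (x * y * (1 + x) / (1 + y + x * y)) \<le> sqrt m * (m * m * (1 + m) / (1 + m + m * m))"
  proof (rule mult_mono)
    show "sqrt x \<le> sqrt m" using m by simp
    show "x * y * (1 + x) / (1 + y + x * y) \<le> m * m * (1 + m) / (1 + m + m * m)"
      by (rule poly1) (use x y m in auto)
    show "0 \<le> sqrt m" using m by simp
    show "0 \<le> x * y * (1 + x) / (1 + y + x * y)" using x y by (simp add: add_pos_pos)
  qed
  have sA: "0 \<le> sqrt y * Af y" using y Af_nn by simp
  have "sqrt (x * y) * d2 x y \<le> sqrt y * Af y * (10/7)"
    unfolding e using order_trans[OF k key] sA by (rule mult_left_mono)
  moreover have "dstar y z \<ge> 10/7 * sqrt y * Af y" using dstar_lb y z by simp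
  ultimately show ?thesis unfolding qfun_def by simp
qed


lemma ident:
  fixes a b c T0 T1 T2 sb sc t vn vn1 vn2 :: real
  assumes sb: "sqrt b = sb" and sbc: "sqrt (b * c) = sb * sc"
    and T0: "T0 = sb^2 * sc^2 * t^2" "sqrt T0 = sb * sc * t"
    and T1: "T1 = sc^2 * t^2" "sqrt T1 = sc * t"
    and T2: "T2 = t^2" "sqrt T2 = t"
  shows "2 * vn * T0 * (d0 b c * vn + d1 b c * vn1 + d2 b c * vn2) =
   (dstar a b * T0 * vn^2 + sqrt (a*b) * d2 a b * (7/10 * sqrt T0 * vn - sqrt T1 * vn1)^2)
 - (dstar b c * T1 * vn1^2 + sqrt (b*c) * d2 b c * (7/10 * sqrt T1 * vn1 - sqrt T2 * vn2)^2)
 + (pfun a b c * T0 * vn^2 + qfun a b c * (7/10 * sqrt T0 * vn - sqrt T1 * vn1)^2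
    + sqrt (b*c) * d2 b c * (sqrt T0 * vn - 7/10 * sqrt T1 * vn1 + sqrt T2 * vn2)^2)"
  unfolding pfun_def qfun_def dstar_def[of b c] sb sbc T0(2) T1(2) T2(2) unfolding T0(1) T1(1) T2(1)
  by (simp add: field_simps power2_eq_square)

theorem lemma3p1:
  fixes tau :: "nat \<Rightarrow> real" and n :: nat and vn vn1 vn2 :: real
  assumes tau_pos: "\<And>k. k \<ge> 1 \<Longrightarrow> tau k > 0"
    and ratio_bd: "\<And>k. k \<ge> 2 \<Longrightarrow> 0 < ratio tau k \<and> ratio tau k < Re_crit"
    and n3: "n \<ge> 3"
  shows "2 * vn * tau n * (d0 (ratio tau n) (ratio tau (n-1)) * vn
            + d1 (ratio tau n) (ratio tau (n-1)) * vn1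
            + d2 (ratio tau n) (ratio tau (n-1)) * vn2)
           = Gfun tau n vn vn1 - Gfun tau (n-1) vn1 vn2 + Ffun tau n vn vn1 vn2
      \<and> Gfun tau n vn vn1 \<ge> 0
      \<and> Gfun tau (n-1) vn1 vn2 \<ge> 0
      \<and> Ffun tau n vn vn1 vn2 \<ge> 0
      \<and> Ffun tau n vn vn1 vn2 \<ge> tau n / 50 * vn^2"
proof -
  define a where "a = ratio tau (n+1)"
  define b where "b = ratio tau n"
  define c where "c = ratio tau (n-1)"
  have nn1: "n - 1 + 1 = n" "n - 1 - 1 = n - 2" using n3 by auto
  have Re: "Re_crit < 149/100" using Re_props by simp
  have a: "0 < a" "a < Re_crit" using ratio_bd[of "n+1"] n3 unfolding a_def by auto
  have b: "0 < b" "b < Re_crit" using ratio_bd[of "n"] n3 unfolding b_def by auto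
  have c: "0 < c" "c < Re_crit" using ratio_bd[of "n-1"] n3 unfolding c_def by auto
  have t0: "tau n > 0" and t1: "tau (n-1) > 0" and t2: "tau (n-2) > 0" using tau_pos n3 by auto
  have hb: "tau n = b * tau (n-1)" unfolding b_def ratio_def using t1 by simp
  have hc: "tau (n-1) = c * tau (n-2)" unfolding c_def ratio_def using t2 nn1 by simp
  define sb where "sb = sqrt b"
  define sc where "sc = sqrt c"
  define t where "t = sqrt (tau (n-2))"
  have e2: "tau (n-2) = t^2" "sqrt (tau (n-2)) = t" unfolding t_def using t2 by auto
  have e1: "tau (n-1) = sc^2 * t^2" "sqrt (tau (n-1)) = sc * t"
    unfolding sc_def t_def using hc t2 c by (auto simp: real_sqrt_mult)
  have e0: "tau n = sb^2 * sc^2 * t^2" "sqrt (tau n) = sb * sc * t"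
    unfolding sb_def sc_def t_def using hb hc t2 c b by (auto simp: real_sqrt_mult)
  have G1: "Gfun tau n vn vn1 = dstar a b * tau n * vn^2 + sqrt (a*b) * d2 a b * (7/10 * sqrt (tau n) * vn - sqrt (tau (n-1)) * vn1)^2"
    unfolding Gfun_def a_def b_def by simp
  have G2: "Gfun tau (n-1) vn1 vn2 = dstar b c * tau (n-1) * vn1^2 + sqrt (b*c) * d2 b c * (7/10 * sqrt (tau (n-1)) * vn1 - sqrt (tau (n-2)) * vn2)^2"
    unfolding Gfun_def b_def c_def nn1 by simp
  have F1: "Ffun tau n vn vn1 vn2 = pfun a b c * tau n * vn^2 + qfun a b c * (7/10 * sqrt (tau n) * vn - sqrt (tau (n-1)) * vn1)^2
    + sqrt (b*c) * d2 b c * (sqrt (tau n) * vn - 7/10 * sqrt (tau (n-1)) * vn1 + sqrt (tau (n-2)) * vn2)^2"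
    unfolding Ffun_def a_def b_def c_def by simp
  have id: "2 * vn * tau n * (d0 b c * vn + d1 b c * vn1 + d2 b c * vn2)
      = Gfun tau n vn vn1 - Gfun tau (n-1) vn1 vn2 + Ffun tau n vn vn1 vn2"
    unfolding G1 G2 F1
    by (rule ident[OF _ _ e0 e1 e2]) (use b c in \<open>auto simp: sb_def sc_def real_sqrt_mult\<close>)
  have ds_ab: "dstar a b \<ge> 0" using dstar_nn a b Re by simp
  have ds_bc: "dstar b c \<ge> 0" using dstar_nn b c Re by simp
  have d2ab: "sqrt (a*b) * d2 a b \<ge> 0" using d2_nn a b by simp
  have d2bc: "sqrt (b*c) * d2 b c \<ge> 0" using d2_nn b c by simp
  have Gn: "Gfun tau n vn vn1 \<ge> 0" unfolding G1 using ds_ab d2ab t0 by simp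
  have Gn1: "Gfun tau (n-1) vn1 vn2 \<ge> 0" unfolding G2 using ds_bc d2bc t1 by simp
  have p: "pfun a b c \<ge> 1/50" using p_box a b c Re by simp
  have q: "qfun a b c \<ge> 0" using q_nn a b c Re by simp
  have "pfun a b c * tau n * vn^2 \<ge> 1/50 * tau n * vn^2"
    using p t0 by (intro mult_right_mono) auto
  moreover have "qfun a b c * (7/10 * sqrt (tau n) * vn - sqrt (tau (n-1)) * vn1)^2 \<ge> 0" using q by simp
  moreover have "sqrt (b*c) * d2 b c * (sqrt (tau n) * vn - 7/10 * sqrt (tau (n-1)) * vn1 + sqrt (tau (n-2)) * vn2)^2 \<ge> 0"
    using d2bc by simp
  ultimately have Fl: "Ffun tau n vn vn1 vn2 \<ge> tau n / 50 * vn^2" unfolding F1 by simp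
  moreover have "tau n / 50 * vn^2 \<ge> 0" using t0 by simp
  ultimately show ?thesis using id Gn Gn1 unfolding b_def c_def by linarith
qed

end
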